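(* Let $n=p^{\alpha}qr$ where $p,q,r$ are distinct primes and $\alpha\geq 1$ is an integer. Then the complement graph $\mathbb{AG}^c(\mathbb{Z}_n)$ of $\mathbb{AG}(\mathbb{Z}_n)$ has no induced cycle of odd length greater than $3$.
   Context: For a commutative ring $R$ with unity, the annihilating-ideal graph $\mathbb{AG}(R)$ is the simple graph whose vertex set is the set of all non-zero ideals of $R$ with non-zero annihilator, two distinct vertices $I,J$ being adjacent if and only if $IJ=0$. $\mathbb{AG}^c(R)$ denotes its complement (same vertex set, two distinct vertices adjacent iff they are not adjacent in $\mathbb{AG}(R)$). An induced cycle is an induced subgraph isomorphic to a cycle. *)

theory Defs
  imports "HOL-Algebra.Ideal_Product" "HOL-Number_Theory.Residues"
begin

definition ann :: "('a, 'b) ring_scheme \<Rightarrow> 'a set \<Rightarrow> 'a set" where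
  "ann R I = {x \<in> carrier R. \<forall>y\<in>I. x \<otimes>\<^bsub>R\<^esub> y = \<zero>\<^bsub>R\<^esub>}"

definition AG_vertices :: "('a, 'b) ring_scheme \<Rightarrow> 'a set set" where
  "AG_vertices R = {I. ideal I R \<and> I \<noteq> {\<zero>\<^bsub>R\<^esub>} \<and> ann R I \<noteq> {\<zero>\<^bsub>R\<^esub>}}"

definition AG_adj :: "('a, 'b) ring_scheme \<Rightarrow> 'a set \<Rightarrow> 'a set \<Rightarrow> bool" where
  "AG_adj R I J \<longleftrightarrow> I \<in> AG_vertices R \<and> J \<in> AG_vertices R \<and> I \<noteq> J
      \<and> ideal_prod R I J = {\<zero>\<^bsub>R\<^esub>}"

definition AGc_adj :: "('a, 'b) ring_scheme \<Rightarrow> 'a set \<Rightarrow> 'a set \<Rightarrow> bool" where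
  "AGc_adj R I J \<longleftrightarrow> I \<in> AG_vertices R \<and> J \<in> AG_vertices R \<and> I \<noteq> J
      \<and> \<not> AG_adj R I J"

definition has_induced_cycle :: "'v set \<Rightarrow> ('v \<Rightarrow> 'v \<Rightarrow> bool) \<Rightarrow> nat \<Rightarrow> bool" where
  "has_induced_cycle V E k \<longleftrightarrow> 3 \<le> k \<and>
     (\<exists>f. (\<forall>i<k. f i \<in> V) \<and> inj_on f {..<k} \<and>
          (\<forall>i<k. \<forall>j<k. E (f i) (f j) \<longleftrightarrow> (j = Suc i mod k \<or> i = Suc j mod k)))"

end

theory Submission
  imports Defs
begin

lemma (in residues) ideal_gen:
  assumes I: "ideal I R" and nz: "I \<noteq> {0}"
  shows "\<exists>g\<in>I. g > 0 \<and> (\<forall>x\<in>I. g dvd x)"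
proof -
  have sg: "additive_subgroup I R" using I ideal.axioms(1) by blast
  have I0: "0 \<in> I" using additive_subgroup.zero_closed[OF sg] res_zero_eq by simp
  have Icar: "I \<subseteq> {0..m-1}" using ideal.Icarr[OF I] res_carrier_eq by auto
  obtain y where y: "y \<in> I" "y \<noteq> 0" using nz I0 by blast
  define S where "S = {x\<in>I. x > 0}"
  have finS: "finite S"
  proof (rule finite_subset)
    show "S \<subseteq> {0..m-1}" using Icar unfolding S_def by blast
  qed simp
  have yS: "y \<in> S" using y Icar unfolding S_def by force
  define g where "g = Min S"
  have gS: "g \<in> S" using finS yS g_def Min_in by blast
  have gmin: "\<And>z. z \<in> S \<Longrightarrow> g \<le> z" using finS g_def by simp
  have gI: "g \<in> I" and gpos: "g > 0" using gS S_def by auto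
  have "g dvd x" if xI: "x \<in> I" for x
  proof (rule ccontr)
    assume nd: "\<not> g dvd x"
    have x0: "0 \<le> x" "x < m" using xI Icar by auto
    have dc: "x div g \<in> carrier R" using x0 gpos res_carrier_eq
    proof -
      have "0 \<le> x div g" using x0 gpos by (simp add: pos_imp_zdiv_nonneg_iff)
      moreover have "x div g \<le> x" using x0 gpos by (cases "x = 0") (simp_all add: int_div_le_self)
      ultimately show ?thesis using x0 res_carrier_eq by auto
    qed
    have t1: "x div g \<otimes> g \<in> I" using ideal.I_l_closed[OF I gI dc] .
    have t2: "\<ominus> (x div g \<otimes> g) \<in> I" using additive_subgroup.a_inv_closed[OF sg t1] .
    have t3: "x \<oplus> \<ominus> (x div g \<otimes> g) \<in> I" using additive_subgroup.a_closed[OF sg xI t2] .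
    have "x \<oplus> \<ominus> (x div g \<otimes> g) = (x - x div g * g) mod m"
      by (simp add: res_add_eq res_neg_eq res_mult_eq mod_simps)
    also have "\<dots> = x mod g" using x0 gpos
    proof -
      have "x - x div g * g = x mod g" by (simp add: minus_div_mult_eq_mod)
      moreover have "0 \<le> x mod g" using gpos by simp
      moreover have "x mod g < m" using x0 gpos
        using zmod_le_nonneg_dividend[of x g] by linarith
      ultimately show ?thesis by simp
    qed
    finally have "x mod g \<in> I" using t3 by simp
    moreover have "x mod g > 0" using nd gpos by (simp add: dvd_eq_mod_eq_0 order_less_le)
    ultimately have "x mod g \<in> S" using S_def by simp
    hence "g \<le> x mod g" by (rule gmin)
    thus False using gpos pos_mod_bound[of g x] by linarith
  qed
  thus ?thesis using gI gpos by blast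
qed

lemma sucmod: "i < k \<Longrightarrow> Suc i mod k = (if Suc i = k then 0 else Suc i)"
  by auto

lemma comb:
  fixes a :: "nat \<Rightarrow> nat" and A B :: "nat \<Rightarrow> bool" and \<alpha> k :: nat
  assumes k: "5 \<le> k"
  and H: "\<And>i j. i<k \<Longrightarrow> j<k \<Longrightarrow> i\<noteq>j \<Longrightarrow>
     (a i + a j < \<alpha> \<or> (A i \<and> A j) \<or> (B i \<and> B j)) \<longleftrightarrow> (j = Suc i mod k \<or> i = Suc j mod k)"
  shows False
proof -
  define nx where "nx i = Suc i mod k" for i
  have nxk: "nx i < k" if "i < k" for i using that k unfolding nx_def by simp
  have nxif: "nx i = (if Suc i = k then 0 else Suc i)" if "i < k" for i
    using that unfolding nx_def by (rule sucmod)
  have Hn: "\<And>i j. i<k \<Longrightarrow> j<k \<Longrightarrow> i\<noteq>j \<Longrightarrow>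
     (a i + a j < \<alpha> \<or> (A i \<and> A j) \<or> (B i \<and> B j)) \<longleftrightarrow> (j = nx i \<or> i = nx j)"
    using H unfolding nx_def by blast
  have tri: False if "x<k" "y<k" "z<k" "x\<noteq>y" "y\<noteq>z" "x\<noteq>z"
    "y = nx x \<or> x = nx y" "z = nx y \<or> y = nx z" "z = nx x \<or> x = nx z" for x y z
    using that k by (auto simp: nxif split: if_splits)
  have cl: "i = j" if C: "\<And>x y. x<k \<Longrightarrow> y<k \<Longrightarrow> x\<noteq>y \<Longrightarrow> P x \<Longrightarrow> P y \<Longrightarrow> (y = nx x \<or> x = nx y)"
    and ij: "i<k" "j<k" "P i" "P (nx i)" "P j" "P (nx j)" for P i j
  proof (rule ccontr)
    assume ne: "i \<noteq> j"
    show False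
    proof (cases "j = nx i")
      case True
      have d: "i \<noteq> nx i" "nx i \<noteq> nx j" "i \<noteq> nx j" using True ij k by (auto simp: nxif split: if_splits)
      show ?thesis using tri[of i "nx i" "nx j"] C d ij nxk by metis
    next
      case False
      have d: "i \<noteq> nx i" using ij k by (auto simp: nxif split: if_splits)
      show ?thesis using tri[of i "nx i" j] C d ij nxk ne False by metis
    qed
  qed
  have clA: "i = j" if "i<k" "j<k" "A i" "A (nx i)" "A j" "A (nx j)" for i j
    by (rule cl[of A]) (use Hn that in blast)+
  have clB: "i = j" if "i<k" "j<k" "B i" "B (nx i)" "B j" "B (nx j)" for i j
    by (rule cl[of B]) (use Hn that in blast)+
  define S where "S = {i. i<k \<and> \<not> a i + a (nx i) < \<alpha>}"
  define SA where "SA = {i. i<k \<and> A i \<and> A (nx i)}"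
  define SB where "SB = {i. i<k \<and> B i \<and> B (nx i)}"
  have "S \<subseteq> SA \<union> SB"
  proof
    fix i assume "i \<in> S"
    hence "i < k" "\<not> a i + a (nx i) < \<alpha>" unfolding S_def by auto
    moreover have "i \<noteq> nx i" using \<open>i<k\<close> k by (auto simp: nxif)
    ultimately show "i \<in> SA \<union> SB" using Hn[of i "nx i"] nxk unfolding SA_def SB_def by auto
  qed
  moreover have "card SA \<le> Suc 0" unfolding SA_def using clA by (subst card_le_Suc0_iff_eq) auto
  moreover have "card SB \<le> Suc 0" unfolding SB_def using clB by (subst card_le_Suc0_iff_eq) auto
  moreover have "finite SA" "finite SB" unfolding SA_def SB_def by auto
  ultimately have cS: "card S \<le> 2"
  proof -
    assume a1: "S \<subseteq> SA \<union> SB" and a2: "card SA \<le> Suc 0" "card SB \<le> Suc 0" "finite SA" "finite SB"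
    have "card S \<le> card (SA \<union> SB)" using a1 a2 by (intro card_mono) auto
    also have "\<dots> \<le> card SA + card SB" by (rule card_Un_le)
    finally show ?thesis using a2 by linarith
  qed
  have fS: "finite S" unfolding S_def by auto
  define T where "T = {i. i<k \<and> nx (nx i) \<in> S}"
  have injnx: "inj_on nx {..<k}"
    by (rule inj_onI) (auto simp: nxif split: if_splits)
  have "inj_on (nx \<circ> nx) T"
    by (rule comp_inj_on) (use injnx nxk in \<open>auto simp: T_def intro: inj_on_subset\<close>)
  hence cT: "card T \<le> card S"
    by (rule card_inj_on_le) (use fS in \<open>auto simp: T_def\<close>)
  have c4: "card (S \<union> T) \<le> 4" using cS cT card_Un_le[of S T] by linarith
  have "\<not> {..<k} \<subseteq> S \<union> T"
  proof (intro notI)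
    assume "{..<k} \<subseteq> S \<union> T"
    moreover have "finite (S \<union> T)" using fS unfolding T_def by auto
    ultimately have "card {..<k} \<le> card (S \<union> T)" by (rule card_mono[rotated])
    thus False using c4 k by simp
  qed
  then obtain i where i: "i < k" "i \<notin> S" "i \<notin> T" by auto
  define j where "j = nx i"
  define l where "l = nx j"
  define m where "m = nx l"
  have jlm: "j < k" "l < k" "m < k" using nxk i unfolding j_def l_def m_def by auto
  have g1: "a i + a j < \<alpha>" using i unfolding S_def j_def by auto
  have g2: "a l + a m < \<alpha>" using i jlm unfolding S_def T_def m_def l_def j_def by auto
  have "a i + a l < \<alpha> \<or> a m + a j < \<alpha>" using g1 g2 by linarith
  moreover have "i \<noteq> l" "\<not> (l = nx i \<or> i = nx l)" using i k jlm unfolding l_def j_def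
    by (auto simp: nxif split: if_splits)
  moreover have "m \<noteq> j" "\<not> (j = nx m \<or> m = nx j)" using i k jlm unfolding m_def l_def j_def
    by (auto simp: nxif split: if_splits)
  ultimately show False using Hn[of i l] Hn[of m j] i jlm by blast
qed

lemma ntdiv:
  fixes g h :: int and p q r \<alpha> :: nat
  assumes pr: "prime p" "prime q" "prime r" and d: "p \<noteq> q" "p \<noteq> r" "q \<noteq> r"
    and gh: "g > 0" "h > 0"
  shows "(int (p ^ \<alpha> * q * r) dvd g * h) \<longleftrightarrow>
     \<not> (multiplicity (int p) g + multiplicity (int p) h < \<alpha> \<or>
        (\<not> int q dvd g \<and> \<not> int q dvd h) \<or> (\<not> int r dvd g \<and> \<not> int r dvd h))"
proof -
  have P: "prime (int p)" "prime (int q)" "prime (int r)" using pr by auto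
  have c1: "coprime (int p ^ \<alpha>) (int q)"
    using primes_coprime[OF P(1) P(2)] d by (simp add: coprime_power_left_iff)
  have c2: "coprime (int p ^ \<alpha> * int q) (int r)"
    using primes_coprime[OF P(1) P(3)] primes_coprime[OF P(2) P(3)] d
    by (simp add: coprime_power_left_iff)
  have eq: "int (p ^ \<alpha> * q * r) = int p ^ \<alpha> * int q * int r" by simp
  have "(int (p ^ \<alpha> * q * r) dvd g * h) \<longleftrightarrow>
        (int p ^ \<alpha> dvd g * h \<and> int q dvd g * h \<and> int r dvd g * h)"
    unfolding eq
    by (meson c1 c2 divides_mult dvd_mult_left dvd_mult_right dvd_trans)
  also have "int p ^ \<alpha> dvd g * h \<longleftrightarrow> \<alpha> \<le> multiplicity (int p) g + multiplicity (int p) h"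
  proof -
    have "multiplicity (int p) (g * h) = multiplicity (int p) g + multiplicity (int p) h"
      using gh P(1) by (intro prime_elem_multiplicity_mult_distrib) auto
    moreover have "g * h \<noteq> 0" using gh by simp
    moreover have "\<not> is_unit (int p)" using P(1) pr(1) by (simp add: prime_elem_not_unit) (metis not_prime_1 One_nat_def)
    ultimately show ?thesis using power_dvd_iff_le_multiplicity[of "g*h" "int p" \<alpha>] by simp
  qed
  also have "int q dvd g * h \<longleftrightarrow> int q dvd g \<or> int q dvd h" using P(2) by (simp add: prime_dvd_mult_iff)
  also have "int r dvd g * h \<longleftrightarrow> int r dvd g \<or> int r dvd h" using P(3) by (simp add: prime_dvd_mult_iff)
  finally show ?thesis by linarith
qed

lemma prod_zero_iff:
  fixes m :: int
  assumes I: "0 \<in> I" and J: "0 \<in> J"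
  shows "ideal_prod (residue_ring m) I J = {0} \<longleftrightarrow> (\<forall>i\<in>I. \<forall>j\<in>J. (i * j) mod m = 0)"
proof
  assume h: "ideal_prod (residue_ring m) I J = {0}"
  show "\<forall>i\<in>I. \<forall>j\<in>J. (i * j) mod m = 0"
  proof (intro ballI)
    fix i j assume "i \<in> I" "j \<in> J"
    hence "i \<otimes>\<^bsub>residue_ring m\<^esub> j \<in> ideal_prod (residue_ring m) I J" by (rule ideal_prod.prod)
    thus "(i * j) mod m = 0" using h by (simp add: residue_ring_def)
  qed
next
  assume h: "\<forall>i\<in>I. \<forall>j\<in>J. (i * j) mod m = 0"
  have "s = 0" if "s \<in> ideal_prod (residue_ring m) I J" for s
    using that by (induct s rule: ideal_prod.induct) (use h in \<open>auto simp: residue_ring_def\<close>)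
  moreover have "0 \<in> ideal_prod (residue_ring m) I J"
    using ideal_prod.prod[OF I J, of "residue_ring m"] by (simp add: residue_ring_def)
  ultimately show "ideal_prod (residue_ring m) I J = {0}" by blast
qed

theorem lemma5:
  fixes p q r \<alpha> n k :: nat
  assumes "prime p" "prime q" "prime r"
    and "p \<noteq> q" "p \<noteq> r" "q \<noteq> r"
    and "\<alpha> \<ge> 1"
    and "n = p ^ \<alpha> * q * r"
    and "odd k" "k > 3"
  shows "\<not> has_induced_cycle (AG_vertices (residue_ring (int n))) (AGc_adj (residue_ring (int n))) k"
proof
  assume "has_induced_cycle (AG_vertices (residue_ring (int n))) (AGc_adj (residue_ring (int n))) k"
  then obtain f where fV: "\<forall>i<k. f i \<in> AG_vertices (residue_ring (int n))"
    and finj: "inj_on f {..<k}"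
    and fE: "\<forall>i<k. \<forall>j<k. AGc_adj (residue_ring (int n)) (f i) (f j) \<longleftrightarrow> (j = Suc i mod k \<or> i = Suc j mod k)"
    unfolding has_induced_cycle_def by blast
  have k5: "5 \<le> k" using assms(9,10) by presburger
  have p1: "p > 1" "q > 1" "r > 1" using assms(1-3) prime_gt_1_nat by auto
  have "n \<ge> 1 * 2 * 2" unfolding assms(8) using p1
    by (intro mult_mono) (auto simp: one_le_power)
  hence n1: "int n > 1" by simp
  interpret res: residues "int n" "residue_ring (int n)" by unfold_locales (use n1 in simp_all)
  have idl: "ideal (f i) (residue_ring (int n))" "f i \<noteq> {0}" if "i < k" for i
  proof -
    have "f i \<in> AG_vertices (residue_ring (int n))" using fV that by blast
    hence "ideal (f i) (residue_ring (int n)) \<and> f i \<noteq> {\<zero>\<^bsub>residue_ring (int n)\<^esub>}"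
      unfolding AG_vertices_def by blast
    thus "ideal (f i) (residue_ring (int n))" "f i \<noteq> {0}" unfolding res.res_zero_eq by blast+
  qed
  have "\<forall>i. \<exists>g. i < k \<longrightarrow> (g \<in> f i \<and> g > 0 \<and> (\<forall>x\<in>f i. g dvd x))"
  proof (intro allI)
    fix i
    show "\<exists>g. i < k \<longrightarrow> (g \<in> f i \<and> g > 0 \<and> (\<forall>x\<in>f i. g dvd x))"
    proof (cases "i < k")
      case True
      from res.ideal_gen[OF idl(1)[OF True] idl(2)[OF True]] obtain g
        where "g \<in> f i" "g > 0" "\<forall>x\<in>f i. g dvd x" by blast
      thus ?thesis by blast
    qed simp
  qed
  then obtain g where g: "\<And>i. i < k \<Longrightarrow> g i \<in> f i \<and> g i > 0 \<and> (\<forall>x\<in>f i. g i dvd x)"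
    by metis
  have zero_in: "0 \<in> f i" if "i < k" for i
    using idl(1)[OF that] additive_subgroup.zero_closed[OF ideal.axioms(1)] res.res_zero_eq by metis
  have prodiff: "ideal_prod (residue_ring (int n)) (f i) (f j) = {0} \<longleftrightarrow> int n dvd g i * g j"
    if "i < k" "j < k" for i j
  proof -
    have "ideal_prod (residue_ring (int n)) (f i) (f j) = {0} \<longleftrightarrow>
          (\<forall>x\<in>f i. \<forall>y\<in>f j. (x * y) mod int n = 0)"
      by (rule prod_zero_iff) (use zero_in that in auto)
    also have "\<dots> \<longleftrightarrow> int n dvd g i * g j"
    proof
      assume "\<forall>x\<in>f i. \<forall>y\<in>f j. (x * y) mod int n = 0"
      thus "int n dvd g i * g j" using g that by auto
    next
      assume h: "int n dvd g i * g j"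
      show "\<forall>x\<in>f i. \<forall>y\<in>f j. (x * y) mod int n = 0"
      proof (intro ballI)
        fix x y assume "x \<in> f i" "y \<in> f j"
        hence "g i * g j dvd x * y" using g that by (auto intro: mult_dvd_mono)
        thus "(x * y) mod int n = 0" using h dvd_trans by (metis dvd_imp_mod_0)
      qed
    qed
    finally show ?thesis .
  qed
  have adj: "AGc_adj (residue_ring (int n)) (f i) (f j) \<longleftrightarrow> i \<noteq> j \<and> \<not> int n dvd g i * g j"
    if "i < k" "j < k" for i j
  proof -
    have "f i = f j \<longleftrightarrow> i = j" using finj that by (auto dest: inj_onD)
    moreover have "f i \<in> AG_vertices (residue_ring (int n))" "f j \<in> AG_vertices (residue_ring (int n))"
      using fV that by blast+
    ultimately show ?thesis using prodiff[OF that] unfolding AGc_adj_def AG_adj_def res.res_zero_eq by blast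
  qed
  show False
  proof (rule comb[of k "\<lambda>i. multiplicity (int p) (g i)" \<alpha> "\<lambda>i. \<not> int q dvd g i" "\<lambda>i. \<not> int r dvd g i"])
    show "5 \<le> k" by (rule k5)
  next
    fix i j assume ij: "i < k" "j < k" "i \<noteq> j"
    have "(multiplicity (int p) (g i) + multiplicity (int p) (g j) < \<alpha> \<or>
        (\<not> int q dvd g i \<and> \<not> int q dvd g j) \<or> (\<not> int r dvd g i \<and> \<not> int r dvd g j))
       \<longleftrightarrow> \<not> int n dvd g i * g j"
      unfolding assms(8) using ntdiv[OF assms(1-6), of "g i" "g j" \<alpha>] g ij by auto
    also have "\<dots> \<longleftrightarrow> AGc_adj (residue_ring (int n)) (f i) (f j)" using adj ij by auto
    also have "\<dots> \<longleftrightarrow> (j = Suc i mod k \<or> i = Suc j mod k)" using fE ij by auto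
    finally show "(multiplicity (int p) (g i) + multiplicity (int p) (g j) < \<alpha> \<or>
        (\<not> int q dvd g i \<and> \<not> int q dvd g j) \<or> (\<not> int r dvd g i \<and> \<not> int r dvd g j))
       \<longleftrightarrow> (j = Suc i mod k \<or> i = Suc j mod k)" .
  qed
qed

end
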